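(* Up to multiplication by a positive integer, every basic weight of a basic system of type $F_4$ is one of the following (coordinates $\lambda_k=\langle\lambda,e_k\rangle$): (1) $(F_4,2,2)$: $(2,0,-1,1)$, $(1,0,-2,1)$, $(0,-1,-2,1)$; (2) $(F_4,2,3)$: $(\tfrac32,\tfrac12,-\tfrac12,\tfrac12)$, $(1,0,-1,1)$, $(\tfrac12,\tfrac12,-\tfrac32,\tfrac12)$, $(\tfrac12,-\tfrac12,-\tfrac32,\tfrac12)$, $(-\tfrac12,-\tfrac12,-\tfrac32,\tfrac12)$; (3) $(F_4,3,2)$: $(2,1,0,-1)$, $(1,1,0,-2)$, $(1,0,-1,-2)$, $(0,1,-1,-2)$, $(-1,0,-1,-2)$; (4) $(F_4,3,3)$: $(1,1,0,-1)$, $(\tfrac12,\tfrac12,-\tfrac12,-\tfrac32)$, $(-\tfrac12,\tfrac12,-\tfrac12,-\tfrac32)$.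
   Context: $F_4$ is realized in $\mathbb R^4$ with orthonormal basis $e_1,\dots,e_4$ and standard inner product, simple roots $\alpha_1=e_2-e_3$, $\alpha_2=e_3-e_4$, $\alpha_3=e_4$, $\alpha_4=\tfrac12(e_1-e_2-e_3-e_4)$. Let $W$ be the Weyl group, $\alpha^\vee=2\alpha/\langle\alpha,\alpha\rangle$. A weight is integral if $\langle\lambda,\alpha^\vee\rangle\in\mathbb Z$ for all roots $\alpha$; $\overline\lambda$ is the dominant weight in $W\lambda$. For $I=\Delta\setminus\{\alpha_i\}$, $J=\Delta\setminus\{\alpha_j\}$, a basic weight of $(\Phi,i,j)$ is an integral $\lambda$ with $\langle\lambda,\alpha^\vee\rangle\in\mathbb Z_{>0}$ for all $\alpha\in I$ and $\{\alpha\in\Delta:\langle\overline\lambda,\alpha\rangle=0\}=J$; $(\Phi,i,j)$ is a basic system if it has a basic weight. *)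

theory Defs
  imports "HOL-Analysis.Analysis"
begin

definition vec4 :: "real \<Rightarrow> real \<Rightarrow> real \<Rightarrow> real \<Rightarrow> real^4" where
  "vec4 a b c d = vector [a, b, c, d]"

definition F4_roots :: "(real^4) set" where
  "F4_roots =
     {s *\<^sub>R axis k 1 | s k. s \<in> {-1, 1}}
   \<union> {s *\<^sub>R axis k 1 + t *\<^sub>R axis l 1 | s t k l. k \<noteq> l \<and> s \<in> {-1, 1} \<and> t \<in> {-1, 1}}
   \<union> {v. \<forall>k. v $ k \<in> {-1/2, 1/2}}"

definition F4_simple_root :: "nat \<Rightarrow> real^4" where
  "F4_simple_root i =
     (if i = 1 then vec4 0 1 (-1) 0
      else if i = 2 then vec4 0 0 1 (-1)
      else if i = 3 then vec4 0 0 0 1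
      else vec4 (1/2) (-1/2) (-1/2) (-1/2))"

definition F4_simple_roots :: "(real^4) set" where
  "F4_simple_roots = F4_simple_root ` {1..4}"

definition coroot :: "real^4 \<Rightarrow> real^4" where
  "coroot \<alpha> = (2 / (\<alpha> \<bullet> \<alpha>)) *\<^sub>R \<alpha>"

definition refl :: "real^4 \<Rightarrow> real^4 \<Rightarrow> real^4" where
  "refl \<alpha> x = x - (x \<bullet> coroot \<alpha>) *\<^sub>R \<alpha>"

inductive_set F4_weyl :: "(real^4 \<Rightarrow> real^4) set" where
  id: "id \<in> F4_weyl"
| step: "w \<in> F4_weyl \<Longrightarrow> \<alpha> \<in> F4_roots \<Longrightarrow> refl \<alpha> \<circ> w \<in> F4_weyl"

definition F4_integral :: "real^4 \<Rightarrow> bool" where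
  "F4_integral lam \<longleftrightarrow> (\<forall>\<alpha> \<in> F4_roots. lam \<bullet> coroot \<alpha> \<in> \<int>)"

definition F4_dominant :: "real^4 \<Rightarrow> bool" where
  "F4_dominant lam \<longleftrightarrow> (\<forall>\<alpha> \<in> F4_simple_roots. lam \<bullet> \<alpha> \<ge> 0)"

definition F4_dominant_rep :: "real^4 \<Rightarrow> real^4" where
  "F4_dominant_rep lam = (THE \<mu>. \<mu> \<in> (\<lambda>w. w lam) ` F4_weyl \<and> F4_dominant \<mu>)"

definition F4_basic_weight :: "nat \<Rightarrow> nat \<Rightarrow> real^4 \<Rightarrow> bool" where
  "F4_basic_weight i j lam \<longleftrightarrow>
     F4_integral lam \<and>
     (\<forall>\<alpha> \<in> F4_simple_roots - {F4_simple_root i}.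
         lam \<bullet> coroot \<alpha> \<in> \<int> \<and> lam \<bullet> coroot \<alpha> > 0) \<and>
     {\<alpha> \<in> F4_simple_roots. F4_dominant_rep lam \<bullet> \<alpha> = 0} = F4_simple_roots - {F4_simple_root j}"

definition F4_basic_system :: "nat \<Rightarrow> nat \<Rightarrow> bool" where
  "F4_basic_system i j \<longleftrightarrow> (\<exists>lam. F4_basic_weight i j lam)"

end

theory Submission
  imports Defs
begin

lemma vec4_nth[simp]: "vec4 a b c d $ 1 = a" "vec4 a b c d $ 2 = b" "vec4 a b c d $ 3 = c" "vec4 a b c d $ 4 = d"
  by (simp_all add: vec4_def vector_def)

lemma vec4_eta: "x = vec4 (x$1) (x$2) (x$3) (x$4)"
  by (simp add: vec_eq_iff forall_4)

lemma vec4_eq_iff[simp]: "vec4 a b c d = vec4 a' b' c' d' \<longleftrightarrow> a = a' \<and> b = b' \<and> c = c' \<and> d = d'"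
  by (metis vec4_nth vec4_eta)

lemma inner4: "(x::real^4) \<bullet> y = x$1*y$1 + x$2*y$2 + x$3*y$3 + x$4*y$4"
  by (simp add: inner_vec_def sum_4)

lemma inner_vec4[simp]: "vec4 a b c d \<bullet> vec4 a' b' c' d' = a*a' + b*b' + c*c' + d*d'"
  by (simp add: inner4)

lemma scale_vec4[simp]: "r *\<^sub>R vec4 a b c d = vec4 (r*a) (r*b) (r*c) (r*d)"
  by (subst vec4_eta) simp

lemma add_vec4[simp]: "vec4 a b c d + vec4 a' b' c' d' = vec4 (a+a') (b+b') (c+c') (d+d')"
  by (subst vec4_eta) simp

lemma diff_vec4[simp]: "vec4 a b c d - vec4 a' b' c' d' = vec4 (a-a') (b-b') (c-c') (d-d')"
  by (subst vec4_eta) simp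

lemma vec4_eq_0[simp]: "vec4 a b c d = 0 \<longleftrightarrow> a = 0 \<and> b = 0 \<and> c = 0 \<and> d = 0"
  by (metis vec4_eq_iff vec4_eta zero_index)

lemma mem_vec4: "x \<in> A \<longleftrightarrow> vec4 (x$1) (x$2) (x$3) (x$4) \<in> A"
  using vec4_eta[of x] by simp

definition L1 :: "(real^4) list" where "L1 = [vec4 (-1) 0 0 0, vec4 (-1/2) (-1/2) (-1/2) (-1/2), vec4 (-1/2) (-1/2) (-1/2) (1/2), vec4 (-1/2) (-1/2) (1/2) (-1/2), vec4 (-1/2) (-1/2) (1/2) (1/2), vec4 (-1/2) (1/2) (-1/2) (-1/2), vec4 (-1/2) (1/2) (-1/2) (1/2), vec4 (-1/2) (1/2) (1/2) (-1/2), vec4 (-1/2) (1/2) (1/2) (1/2), vec4 0 (-1) 0 0, vec4 0 0 (-1) 0, vec4 0 0 0 (-1), vec4 0 0 0 1, vec4 0 0 1 0, vec4 0 1 0 0, vec4 (1/2) (-1/2) (-1/2) (-1/2), vec4 (1/2) (-1/2) (-1/2) (1/2), vec4 (1/2) (-1/2) (1/2) (-1/2), vec4 (1/2) (-1/2) (1/2) (1/2), vec4 (1/2) (1/2) (-1/2) (-1/2), vec4 (1/2) (1/2) (-1/2) (1/2), vec4 (1/2) (1/2) (1/2) (-1/2), vec4 (1/2) (1/2) (1/2) (1/2), vec4 1 0 0 0]"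

definition L2 :: "(real^4) list" where "L2 = [vec4 (-1) (-1) 0 0, vec4 (-1) 0 (-1) 0, vec4 (-1) 0 0 (-1), vec4 (-1) 0 0 1, vec4 (-1) 0 1 0, vec4 (-1) 1 0 0, vec4 0 (-1) (-1) 0, vec4 0 (-1) 0 (-1), vec4 0 (-1) 0 1, vec4 0 (-1) 1 0, vec4 0 0 (-1) (-1), vec4 0 0 (-1) 1, vec4 0 0 1 (-1), vec4 0 0 1 1, vec4 0 1 (-1) 0, vec4 0 1 0 (-1), vec4 0 1 0 1, vec4 0 1 1 0, vec4 1 (-1) 0 0, vec4 1 0 (-1) 0, vec4 1 0 0 (-1), vec4 1 0 0 1, vec4 1 0 1 0, vec4 1 1 0 0]"

lemma long_root_in: "k \<noteq> l \<Longrightarrow> s \<in> {-1,1} \<Longrightarrow> t \<in> {-1,1} \<Longrightarrow> (s::real) *\<^sub>R axis (k::4) 1 + t *\<^sub>R axis l 1 \<in> set L2"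
  apply (subst mem_vec4)
  apply (simp add: axis_def)
  apply (elim disjE)
  using exhaust_4[of k] exhaust_4[of l] apply (elim disjE; simp add: L2_def)+
  done

lemma short_root_in: "s \<in> {-1,1} \<Longrightarrow> (s::real) *\<^sub>R axis (k::4) 1 \<in> set L1"
  apply (subst mem_vec4)
  apply (simp add: axis_def)
  apply (elim disjE)
  using exhaust_4[of k] apply (elim disjE; simp add: L1_def)+
  done

lemma half_root_in: assumes "\<forall>k. x $ k \<in> {-1/2, 1/2}" shows "x \<in> set L1"
proof -
  have "x$1 \<in> {-1/2,1/2}" "x$2 \<in> {-1/2,1/2}" "x$3 \<in> {-1/2,1/2}" "x$4 \<in> {-1/2,1/2}" using assms by auto
  then show ?thesis
    apply (subst mem_vec4)
    apply (simp only: insert_iff empty_iff simp_thms)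
    apply (elim disjE)
    by (simp_all add: L1_def)
qed

lemma roots_sub: "F4_roots \<subseteq> set (L1 @ L2)"
proof
  fix x assume "x \<in> F4_roots"
  then consider (a) s k where "s \<in> {-1,1}" "x = s *\<^sub>R axis k 1"
    | (b) s t k l where "k \<noteq> l" "s \<in> {-1,1}" "t \<in> {-1,1}" "x = s *\<^sub>R axis k 1 + t *\<^sub>R axis l 1"
    | (c) "\<forall>k. x $ k \<in> {-1/2, 1/2}"
    unfolding F4_roots_def by blast
  then show "x \<in> set (L1 @ L2)"
  proof cases
    case a then show ?thesis using short_root_in[OF a(1), of k] by simp
  next
    case b then show ?thesis using long_root_in[OF b(1-3)] by simp
  next
    case c then show ?thesis using half_root_in[OF c] by simp
  qed
qed

definition h4 :: "real^4" where "h4 = vec4 (1/2) (1/2) (1/2) (1/2)"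

definition Lat :: "real^4 \<Rightarrow> bool" where
  "Lat x \<longleftrightarrow> (\<exists>n t. n$1 \<in> \<int> \<and> n$2 \<in> \<int> \<and> n$3 \<in> \<int> \<and> n$4 \<in> \<int> \<and> t \<in> \<int> \<and> x = n + t *\<^sub>R h4)"

definition intcor :: "real^4 \<Rightarrow> bool" where
  "intcor c \<longleftrightarrow> c$1 \<in> \<int> \<and> c$2 \<in> \<int> \<and> c$3 \<in> \<int> \<and> c$4 \<in> \<int> \<and> (c$1+c$2+c$3+c$4)/2 \<in> \<int>"

lemma Lat_int: "a \<in> \<int> \<Longrightarrow> b \<in> \<int> \<Longrightarrow> c \<in> \<int> \<Longrightarrow> d \<in> \<int> \<Longrightarrow> Lat (vec4 a b c d)"
  unfolding Lat_def by (rule exI[of _ "vec4 a b c d"], rule exI[of _ 0]) simp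

lemma Lat_half: "a - 1/2 \<in> \<int> \<Longrightarrow> b - 1/2 \<in> \<int> \<Longrightarrow> c - 1/2 \<in> \<int> \<Longrightarrow> d - 1/2 \<in> \<int> \<Longrightarrow> Lat (vec4 a b c d)"
  unfolding Lat_def by (rule exI[of _ "vec4 (a-1/2) (b-1/2) (c-1/2) (d-1/2)"], rule exI[of _ 1]) (simp add: h4_def)

lemma Lat_pair: assumes "Lat v" "intcor c" shows "v \<bullet> c \<in> \<int>"
proof -
  obtain n t where n: "n$1 \<in> \<int>" "n$2 \<in> \<int>" "n$3 \<in> \<int>" "n$4 \<in> \<int>" "t \<in> \<int>" "v = n + t *\<^sub>R h4"
    using assms(1) unfolding Lat_def by blast
  have "v \<bullet> c = (n$1*c$1 + n$2*c$2 + n$3*c$3 + n$4*c$4) + t * ((c$1+c$2+c$3+c$4)/2)"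
    by (simp add: n(6) inner4 h4_def algebra_simps)
  also have "\<dots> \<in> \<int>" using n assms(2) unfolding intcor_def
    by (intro Ints_add Ints_mult) auto
  finally show ?thesis .
qed

lemma Lat_comb: assumes "Lat x" "Lat y" "m \<in> \<int>" shows "Lat (x - m *\<^sub>R y)"
proof -
  obtain n t where n: "n$1 \<in> \<int>" "n$2 \<in> \<int>" "n$3 \<in> \<int>" "n$4 \<in> \<int>" "t \<in> \<int>" "x = n + t *\<^sub>R h4"
    using assms(1) unfolding Lat_def by blast
  obtain n' t' where n': "n'$1 \<in> \<int>" "n'$2 \<in> \<int>" "n'$3 \<in> \<int>" "n'$4 \<in> \<int>" "t' \<in> \<int>" "y = n' + t' *\<^sub>R h4"
    using assms(2) unfolding Lat_def by blast
  show ?thesis unfolding Lat_def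
    apply (rule exI[of _ "n - m *\<^sub>R n'"], rule exI[of _ "t - m * t'"])
    using n n' assms(3) by (simp add: algebra_simps Ints_diff Ints_mult)
qed

lemma Lat_cases: assumes "Lat x"
  shows "(x$1 \<in> \<int> \<and> x$2 \<in> \<int> \<and> x$3 \<in> \<int> \<and> x$4 \<in> \<int>) \<or>
         (x$1 - 1/2 \<in> \<int> \<and> x$2 - 1/2 \<in> \<int> \<and> x$3 - 1/2 \<in> \<int> \<and> x$4 - 1/2 \<in> \<int>)"
proof -
  obtain n t where n: "n$1 \<in> \<int>" "n$2 \<in> \<int>" "n$3 \<in> \<int>" "n$4 \<in> \<int>" "t \<in> \<int>" "x = n + t *\<^sub>R h4"
    using assms(1) unfolding Lat_def by blast
  obtain T where T: "t = of_int T" using n(5) Ints_cases by blast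
  obtain m where "T = 2*m \<or> T = 2*m+1" by (metis oddE evenE)
  then show ?thesis
  proof
    assume "T = 2*m"
    then have "x$1 = n$1 + of_int m" "x$2 = n$2 + of_int m" "x$3 = n$3 + of_int m" "x$4 = n$4 + of_int m"
      using n(6) T by (simp_all add: h4_def)
    then show ?thesis using n(1-4) by (metis Ints_add Ints_of_int)
  next
    assume "T = 2*m+1"
    then have "x$1 - 1/2 = n$1 + of_int m" "x$2 - 1/2 = n$2 + of_int m" "x$3 - 1/2 = n$3 + of_int m" "x$4 - 1/2 = n$4 + of_int m"
      using n(6) T by (simp_all add: h4_def algebra_simps)
    then show ?thesis using n(1-4) by (metis Ints_add Ints_of_int)
  qed
qed

definition rootP :: "real^4 \<Rightarrow> bool" where
  "rootP a \<longleftrightarrow> Lat a \<and> a \<bullet> a \<noteq> 0 \<and> intcor (coroot a)"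

lemma rootP_list: "\<forall>a \<in> set (L1 @ L2). rootP a"
  unfolding L1_def L2_def rootP_def intcor_def coroot_def
  by (simp add: Lat_int Lat_half)

lemma rootP: "a \<in> F4_roots \<Longrightarrow> rootP a"
  using roots_sub rootP_list by blast



lemma refl_alt: "refl a x = x - (2 * (x \<bullet> a) / (a \<bullet> a)) *\<^sub>R a"
  by (simp add: refl_def coroot_def)

lemma refl_adj: "refl a x \<bullet> y = x \<bullet> refl a y"
  by (simp add: refl_alt inner_diff_left inner_diff_right inner_commute algebra_simps)

lemma refl_invol: assumes "a \<bullet> a \<noteq> 0" shows "refl a (refl a x) = x"
proof -
  have "(x - (2 * (x \<bullet> a) / (a \<bullet> a)) *\<^sub>R a) \<bullet> a = - (x \<bullet> a)"
    using assms by (simp add: inner_diff_left field_simps)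
  then show ?thesis by (simp add: refl_alt)
qed

lemma refl_inner: assumes "a \<bullet> a \<noteq> 0" shows "refl a x \<bullet> refl a y = x \<bullet> y"
  using refl_adj[of a x "refl a y"] refl_invol[OF assms] by simp

lemma refl_scale: "refl a (c *\<^sub>R x) = c *\<^sub>R refl a x"
  by (simp add: refl_alt algebra_simps)

lemma refl_Lat: assumes "a \<in> F4_roots" "Lat x" shows "Lat (refl a x)"
proof -
  have r: "rootP a" using rootP assms(1) by blast
  show ?thesis unfolding refl_def
    using Lat_comb[OF assms(2), of a] Lat_pair[OF assms(2), of "coroot a"] r unfolding rootP_def by blast
qed

lemma root_nz: "a \<in> F4_roots \<Longrightarrow> a \<bullet> a \<noteq> 0"
  using rootP rootP_def by blast

lemma refl_W: "a \<in> F4_roots \<Longrightarrow> refl a \<in> F4_weyl"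
  using F4_weyl.step[OF F4_weyl.id] by simp

lemma W_Lat: "w \<in> F4_weyl \<Longrightarrow> Lat x \<Longrightarrow> Lat (w x)"
  by (induction w rule: F4_weyl.induct) (auto simp: refl_Lat)

lemma W_inner: "w \<in> F4_weyl \<Longrightarrow> w x \<bullet> w y = x \<bullet> y"
proof (induction w rule: F4_weyl.induct)
  case id then show ?case by simp
next
  case (step w a)
  then show ?case using refl_inner[OF root_nz[OF step(2)], of "w x" "w y"] by simp
qed

lemma W_norm: "w \<in> F4_weyl \<Longrightarrow> norm (w x) = norm x"
  by (simp add: norm_eq_sqrt_inner W_inner)

lemma W_scale: "w \<in> F4_weyl \<Longrightarrow> w (c *\<^sub>R x) = c *\<^sub>R w x"
  by (induction w rule: F4_weyl.induct) (auto simp: refl_scale)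

lemma W_comp: "w \<in> F4_weyl \<Longrightarrow> a \<in> F4_roots \<Longrightarrow> w \<circ> refl a \<in> F4_weyl"
proof (induction w rule: F4_weyl.induct)
  case id
  then show ?case using refl_W by simp
next
  case (step w b)
  have "refl b \<circ> (w \<circ> refl a) \<in> F4_weyl" using F4_weyl.step step by blast
  then show ?case by (metis comp_assoc)
qed

lemma W_inv: "w \<in> F4_weyl \<Longrightarrow> \<exists>u \<in> F4_weyl. \<forall>x. u (w x) = x"
proof (induction w rule: F4_weyl.induct)
  case id
  have "\<forall>x. id (id x) = x" by simp
  then show ?case using F4_weyl.id by blast
next
  case (step w a)
  then obtain u where u: "u \<in> F4_weyl" "\<forall>x. u (w x) = x" by blast
  have "u \<circ> refl a \<in> F4_weyl" using W_comp u step by blast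
  moreover have "\<forall>x. (u \<circ> refl a) ((refl a \<circ> w) x) = x"
    using u(2) refl_invol[OF root_nz[OF step(2)]] by simp
  ultimately show ?case by blast
qed

definition SN :: "real \<Rightarrow> (real^4) set" where
  "SN N = {v. Lat v \<and> v \<bullet> v = N}"

lemma refl_SN: assumes "a \<in> F4_roots" shows "refl a ` SN N = SN N"
proof
  show "refl a ` SN N \<subseteq> SN N"
    using refl_Lat[OF assms] refl_inner[OF root_nz[OF assms]] unfolding SN_def by auto
next
  show "SN N \<subseteq> refl a ` SN N"
  proof
    fix v assume v: "v \<in> SN N"
    have "refl a v \<in> SN N"
      using v refl_Lat[OF assms] refl_inner[OF root_nz[OF assms]] unfolding SN_def by auto
    moreover have "v = refl a (refl a v)" using refl_invol[OF root_nz[OF assms]] by simp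
    ultimately show "v \<in> refl a ` SN N" by blast
  qed
qed

lemma W_img: "w \<in> F4_weyl \<Longrightarrow> (\<lambda>v. w x \<bullet> v) ` SN N = (\<lambda>v. x \<bullet> v) ` SN N"
proof (induction w rule: F4_weyl.induct)
  case id
  then show ?case by simp
next
  case (step w a)
  have "(\<lambda>v. (refl a \<circ> w) x \<bullet> v) ` SN N = (\<lambda>v. w x \<bullet> refl a v) ` SN N"
    by (simp add: refl_adj)
  also have "\<dots> = (\<lambda>v. w x \<bullet> v) ` (refl a ` SN N)" by (simp add: image_image)
  also have "\<dots> = (\<lambda>v. x \<bullet> v) ` SN N" using refl_SN[OF step(2)] step(3) by simp
  finally show ?case .
qed

lemma simple_roots_eq: "F4_simple_roots = {vec4 0 1 (-1) 0, vec4 0 0 1 (-1), vec4 0 0 0 1, vec4 (1/2) (-1/2) (-1/2) (-1/2)}"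
proof -
  have "{1..4::nat} = {1,2,3,4}" by auto
  then show ?thesis unfolding F4_simple_roots_def F4_simple_root_def by auto
qed

lemma dominant_iff: "F4_dominant x \<longleftrightarrow> x$2 - x$3 \<ge> 0 \<and> x$3 - x$4 \<ge> 0 \<and> x$4 \<ge> 0 \<and> x$1 - x$2 - x$3 - x$4 \<ge> 0"
  by (simp add: F4_dominant_def simple_roots_eq inner4)



lemma int_sq_less: "(m::int)^2 < k^2 \<Longrightarrow> 0 \<le> k \<Longrightarrow> -k < m \<and> m < k"
  using power2_less_imp_less[of "\<bar>m\<bar>" k] by (simp add: abs_less_iff)

lemma twice_int: fixes x :: real assumes "x \<in> \<int> \<or> x - 1/2 \<in> \<int>" obtains m :: int where "x = of_int m / 2"
  "x \<in> \<int> \<Longrightarrow> even m" "x - 1/2 \<in> \<int> \<Longrightarrow> odd m"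
proof -
  from assms consider "x \<in> \<int>" | "x - 1/2 \<in> \<int>" by blast
  then show ?thesis
  proof cases
    case 1
    then obtain n where "x = of_int n" using Ints_cases by blast
    moreover have "x - 1/2 \<notin> \<int>"
    proof
      assume "x - 1/2 \<in> \<int>"
      then obtain k where "x - 1/2 = of_int k" using Ints_cases by blast
      with \<open>x = of_int n\<close> have "of_int (2*(n - k)) = (1::real)" by (simp add: algebra_simps)
      then have "2*(n-k) = 1" by linarith
      then show False by presburger
    qed
    ultimately show ?thesis using that[of "2*n"] by simp
  next
    case 2
    then obtain n where n: "x - 1/2 = of_int n" using Ints_cases by blast
    have "x \<notin> \<int>"
    proof
      assume "x \<in> \<int>"
      then obtain k where "x = of_int k" using Ints_cases by blast
      with n have "of_int (2*(k - n)) = (1::real)" by (simp add: algebra_simps)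
      then have "2*(k-n) = 1" by linarith
      then show False by presburger
    qed
    have x: "x = of_int (2*n+1) / 2" using n by (simp add: field_simps)
    show ?thesis
    proof (rule that[of "2*n+1"])
      show "x = of_int (2*n+1) / 2" by (rule x)
      show "x \<in> \<int> \<Longrightarrow> even (2*n+1)" using \<open>x \<notin> \<int>\<close> by blast
      show "odd (2*n+1)" by simp
    qed
  qed
qed

lemma coord_range: fixes x N :: real
  assumes "x \<in> \<int> \<or> x - 1/2 \<in> \<int>" "x^2 \<le> N" "N < (of_int K / 2)^2" "0 \<le> K"
  obtains m :: int where "x = of_int m / 2" "-K < m" "m < K"
    "x \<in> \<int> \<Longrightarrow> even m" "x - 1/2 \<in> \<int> \<Longrightarrow> odd m"
proof -
  obtain m :: int where m: "x = of_int m / 2" "x \<in> \<int> \<Longrightarrow> even m" "x - 1/2 \<in> \<int> \<Longrightarrow> odd m"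
    using twice_int[OF assms(1)] by blast
  have "(of_int m / 2)^2 < (of_int K / 2 :: real)^2" using assms(2,3) m(1) by simp
  then have "(of_int (m^2) :: real) < of_int (K^2)" by (simp add: power_divide)
  then have "m^2 < K^2" by linarith
  then show ?thesis using int_sq_less[of m K] assms(4) m that by blast
qed

lemma SN_coords:
  assumes "v \<in> SN N" "N < (of_int K / 2)^2" "0 \<le> K"
  obtains m1 m2 m3 m4 :: int where "v = vec4 (of_int m1/2) (of_int m2/2) (of_int m3/2) (of_int m4/2)"
    "(even m1 \<and> even m2 \<and> even m3 \<and> even m4) \<or> (odd m1 \<and> odd m2 \<and> odd m3 \<and> odd m4)"
    "-K < m1" "m1 < K" "-K < m2" "m2 < K" "-K < m3" "m3 < K" "-K < m4" "m4 < K"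
    "real_of_int (m1*m1 + m2*m2 + m3*m3 + m4*m4) = 4 * N"
proof -
  have L: "Lat v" and nv: "v$1 * v$1 + v$2 * v$2 + v$3 * v$3 + v$4 * v$4 = N"
    using assms(1) unfolding SN_def by (auto simp: inner4)
  have sq: "(v$1)^2 \<le> N" "(v$2)^2 \<le> N" "(v$3)^2 \<le> N" "(v$4)^2 \<le> N"
    using nv by (simp_all add: power2_eq_square) (smt (verit) zero_le_square)+
  have C: "(v$1 \<in> \<int> \<and> v$2 \<in> \<int> \<and> v$3 \<in> \<int> \<and> v$4 \<in> \<int>) \<or>
         (v$1 - 1/2 \<in> \<int> \<and> v$2 - 1/2 \<in> \<int> \<and> v$3 - 1/2 \<in> \<int> \<and> v$4 - 1/2 \<in> \<int>)"
    using Lat_cases[OF L] .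
  have ci: "v$k \<in> \<int> \<or> v$k - 1/2 \<in> \<int>" if "k \<in> {1,2,3,4}" for k using C that by auto
  obtain m1 :: int where m1: "v$1 = of_int m1 / 2" "-K < m1" "m1 < K" "v$1 \<in> \<int> \<Longrightarrow> even m1" "v$1 - 1/2 \<in> \<int> \<Longrightarrow> odd m1"
    using coord_range[OF ci[of 1] sq(1) assms(2,3)] by auto
  obtain m2 :: int where m2: "v$2 = of_int m2 / 2" "-K < m2" "m2 < K" "v$2 \<in> \<int> \<Longrightarrow> even m2" "v$2 - 1/2 \<in> \<int> \<Longrightarrow> odd m2"
    using coord_range[OF ci[of 2] sq(2) assms(2,3)] by auto
  obtain m3 :: int where m3: "v$3 = of_int m3 / 2" "-K < m3" "m3 < K" "v$3 \<in> \<int> \<Longrightarrow> even m3" "v$3 - 1/2 \<in> \<int> \<Longrightarrow> odd m3"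
    using coord_range[OF ci[of 3] sq(3) assms(2,3)] by auto
  obtain m4 :: int where m4: "v$4 = of_int m4 / 2" "-K < m4" "m4 < K" "v$4 \<in> \<int> \<Longrightarrow> even m4" "v$4 - 1/2 \<in> \<int> \<Longrightarrow> odd m4"
    using coord_range[OF ci[of 4] sq(4) assms(2,3)] by auto
  have S: "real_of_int (m1*m1 + m2*m2 + m3*m3 + m4*m4) = 4 * N"
    using nv m1(1) m2(1) m3(1) m4(1) by (simp add: field_simps)
  show ?thesis
  proof (rule that[of m1 m2 m3 m4])
    show "v = vec4 (of_int m1/2) (of_int m2/2) (of_int m3/2) (of_int m4/2)"
      using m1(1) m2(1) m3(1) m4(1) by (metis vec4_eta)
    show "(even m1 \<and> even m2 \<and> even m3 \<and> even m4) \<or> (odd m1 \<and> odd m2 \<and> odd m3 \<and> odd m4)"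
      using C m1 m2 m3 m4 by blast
    show "real_of_int (m1*m1 + m2*m2 + m3*m3 + m4*m4) = 4 * N" by (rule S)
  qed (use m1 m2 m3 m4 in auto)
qed

definition I3 :: "(int*int*int*int) list" where "I3 = [(-3,-1,-1,-1), (-3,-1,-1,1), (-3,-1,1,-1), (-3,-1,1,1), (-3,1,-1,-1), (-3,1,-1,1), (-3,1,1,-1), (-3,1,1,1), (-2,-2,-2,0), (-2,-2,0,-2), (-2,-2,0,2), (-2,-2,2,0), (-2,0,-2,-2), (-2,0,-2,2), (-2,0,2,-2), (-2,0,2,2), (-2,2,-2,0), (-2,2,0,-2), (-2,2,0,2), (-2,2,2,0), (-1,-3,-1,-1), (-1,-3,-1,1), (-1,-3,1,-1), (-1,-3,1,1), (-1,-1,-3,-1), (-1,-1,-3,1), (-1,-1,-1,-3), (-1,-1,-1,3), (-1,-1,1,-3), (-1,-1,1,3), (-1,-1,3,-1), (-1,-1,3,1), (-1,1,-3,-1), (-1,1,-3,1), (-1,1,-1,-3), (-1,1,-1,3), (-1,1,1,-3), (-1,1,1,3), (-1,1,3,-1), (-1,1,3,1), (-1,3,-1,-1), (-1,3,-1,1), (-1,3,1,-1), (-1,3,1,1), (0,-2,-2,-2), (0,-2,-2,2), (0,-2,2,-2), (0,-2,2,2), (0,2,-2,-2), (0,2,-2,2), (0,2,2,-2), (0,2,2,2), (1,-3,-1,-1), (1,-3,-1,1), (1,-3,1,-1), (1,-3,1,1), (1,-1,-3,-1), (1,-1,-3,1), (1,-1,-1,-3), (1,-1,-1,3), (1,-1,1,-3),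 (1,-1,1,3), (1,-1,3,-1), (1,-1,3,1), (1,1,-3,-1), (1,1,-3,1), (1,1,-1,-3), (1,1,-1,3), (1,1,1,-3), (1,1,1,3), (1,1,3,-1), (1,1,3,1), (1,3,-1,-1), (1,3,-1,1), (1,3,1,-1), (1,3,1,1), (2,-2,-2,0), (2,-2,0,-2), (2,-2,0,2), (2,-2,2,0), (2,0,-2,-2), (2,0,-2,2), (2,0,2,-2), (2,0,2,2), (2,2,-2,0), (2,2,0,-2), (2,2,0,2), (2,2,2,0), (3,-1,-1,-1), (3,-1,-1,1), (3,-1,1,-1), (3,-1,1,1), (3,1,-1,-1), (3,1,-1,1), (3,1,1,-1), (3,1,1,1)]"

definition M3 :: "(real^4) list" where "M3 = map (\<lambda>(a,b,c,d). vec4 (of_int a/2) (of_int b/2) (of_int c/2) (of_int d/2)) I3"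

definition I6 :: "(int*int*int*int) list" where "I6 = [(-4,-2,-2,0), (-4,-2,0,-2), (-4,-2,0,2), (-4,-2,2,0), (-4,0,-2,-2), (-4,0,-2,2), (-4,0,2,-2), (-4,0,2,2), (-4,2,-2,0), (-4,2,0,-2), (-4,2,0,2), (-4,2,2,0), (-2,-4,-2,0), (-2,-4,0,-2), (-2,-4,0,2), (-2,-4,2,0), (-2,-2,-4,0), (-2,-2,0,-4), (-2,-2,0,4), (-2,-2,4,0), (-2,0,-4,-2), (-2,0,-4,2), (-2,0,-2,-4), (-2,0,-2,4), (-2,0,2,-4), (-2,0,2,4), (-2,0,4,-2), (-2,0,4,2), (-2,2,-4,0), (-2,2,0,-4), (-2,2,0,4), (-2,2,4,0), (-2,4,-2,0), (-2,4,0,-2), (-2,4,0,2), (-2,4,2,0), (0,-4,-2,-2), (0,-4,-2,2), (0,-4,2,-2), (0,-4,2,2), (0,-2,-4,-2), (0,-2,-4,2), (0,-2,-2,-4), (0,-2,-2,4), (0,-2,2,-4), (0,-2,2,4), (0,-2,4,-2), (0,-2,4,2), (0,2,-4,-2), (0,2,-4,2), (0,2,-2,-4), (0,2,-2,4), (0,2,2,-4), (0,2,2,4), (0,2,4,-2), (0,2,4,2), (0,4,-2,-2), (0,4,-2,2), (0,4,2,-2), (0,4,2,2), (2,-4,-2,0), (2,-4,0,-2), (2,-4,0,2), (2,-4,2,0), (2,-2,-4,0), (2,-2,0,-4), (2,-2,0,4), (2,-2,4,0), (2,0,-4,-2), (2,0,-4,2), (2,0,-2,-4), (2,0,-2,4),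 (2,0,2,-4), (2,0,2,4), (2,0,4,-2), (2,0,4,2), (2,2,-4,0), (2,2,0,-4), (2,2,0,4), (2,2,4,0), (2,4,-2,0), (2,4,0,-2), (2,4,0,2), (2,4,2,0), (4,-2,-2,0), (4,-2,0,-2), (4,-2,0,2), (4,-2,2,0), (4,0,-2,-2), (4,0,-2,2), (4,0,2,-2), (4,0,2,2), (4,2,-2,0), (4,2,0,-2), (4,2,0,2), (4,2,2,0)]"

definition M6 :: "(real^4) list" where "M6 = map (\<lambda>(a,b,c,d). vec4 (of_int a/2) (of_int b/2) (of_int c/2) (of_int d/2)) I6"


lemma enum1e: "a \<in> {-2,0,2} \<Longrightarrow> b \<in> {-2,0,2} \<Longrightarrow> c \<in> {-2,0,2} \<Longrightarrow> d \<in> {-2,0,2} \<Longrightarrow>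
  a*a+b*b+c*c+d*d = (4::int) \<Longrightarrow> vec4 (of_int a/2) (of_int b/2) (of_int c/2) (of_int d/2) \<in> set L1"
  apply (simp only: insert_iff empty_iff simp_thms)
  apply (elim disjE)
  apply (simp_all add: L1_def)
  done

lemma enum1o: "a \<in> {-1,1} \<Longrightarrow> b \<in> {-1,1} \<Longrightarrow> c \<in> {-1,1} \<Longrightarrow> d \<in> {-1,1} \<Longrightarrow>
  a*a+b*b+c*c+d*d = (4::int) \<Longrightarrow> vec4 (of_int a/2) (of_int b/2) (of_int c/2) (of_int d/2) \<in> set L1"
  apply (simp only: insert_iff empty_iff simp_thms)
  apply (elim disjE)
  apply (simp_all add: L1_def)
  done

lemma rng1e: "even (m::int) \<Longrightarrow> -3 < m \<Longrightarrow> m < 3 \<Longrightarrow> m \<in> {-2,0,2}"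
  by simp presburger

lemma rng1o: "odd (m::int) \<Longrightarrow> -3 < m \<Longrightarrow> m < 3 \<Longrightarrow> m \<in> {-1,1}"
  by simp presburger

lemma SN1_sub: "SN 1 \<subseteq> set L1"
proof
  fix v assume v: "v \<in> SN 1"
  obtain m1 m2 m3 m4 :: int where m: "v = vec4 (of_int m1/2) (of_int m2/2) (of_int m3/2) (of_int m4/2)"
    "(even m1 \<and> even m2 \<and> even m3 \<and> even m4) \<or> (odd m1 \<and> odd m2 \<and> odd m3 \<and> odd m4)"
    "-3 < m1" "m1 < 3" "-3 < m2" "m2 < 3" "-3 < m3" "m3 < 3" "-3 < m4" "m4 < 3"
    "real_of_int (m1*m1 + m2*m2 + m3*m3 + m4*m4) = 4 * 1"
    apply (rule SN_coords[OF v, of 3])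
    by (auto simp: power2_eq_square)
  have S: "m1*m1 + m2*m2 + m3*m3 + m4*m4 = 4" using m(11) by linarith
  from m(2) show "v \<in> set L1"
  proof
    assume "even m1 \<and> even m2 \<and> even m3 \<and> even m4"
    then show ?thesis using enum1e[OF rng1e rng1e rng1e rng1e S] m by blast
  next
    assume "odd m1 \<and> odd m2 \<and> odd m3 \<and> odd m4"
    then show ?thesis using enum1o[OF rng1o rng1o rng1o rng1o S] m by blast
  qed
qed

lemma enum2e: "a \<in> {-2,0,2} \<Longrightarrow> b \<in> {-2,0,2} \<Longrightarrow> c \<in> {-2,0,2} \<Longrightarrow> d \<in> {-2,0,2} \<Longrightarrow>
  a*a+b*b+c*c+d*d = (8::int) \<Longrightarrow> vec4 (of_int a/2) (of_int b/2) (of_int c/2) (of_int d/2) \<in> set L2"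
  apply (simp only: insert_iff empty_iff simp_thms)
  apply (elim disjE)
  apply (simp_all add: L2_def)
  done

lemma enum2o: "a \<in> {-1,1} \<Longrightarrow> b \<in> {-1,1} \<Longrightarrow> c \<in> {-1,1} \<Longrightarrow> d \<in> {-1,1} \<Longrightarrow>
  a*a+b*b+c*c+d*d = (8::int) \<Longrightarrow> vec4 (of_int a/2) (of_int b/2) (of_int c/2) (of_int d/2) \<in> set L2"
  apply (simp only: insert_iff empty_iff simp_thms)
  apply (elim disjE)
  apply (simp_all add: L2_def)
  done

lemma rng2e: "even (m::int) \<Longrightarrow> -3 < m \<Longrightarrow> m < 3 \<Longrightarrow> m \<in> {-2,0,2}"
  by simp presburger

lemma rng2o: "odd (m::int) \<Longrightarrow> -3 < m \<Longrightarrow> m < 3 \<Longrightarrow> m \<in> {-1,1}"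
  by simp presburger

lemma SN2_sub: "SN 2 \<subseteq> set L2"
proof
  fix v assume v: "v \<in> SN 2"
  obtain m1 m2 m3 m4 :: int where m: "v = vec4 (of_int m1/2) (of_int m2/2) (of_int m3/2) (of_int m4/2)"
    "(even m1 \<and> even m2 \<and> even m3 \<and> even m4) \<or> (odd m1 \<and> odd m2 \<and> odd m3 \<and> odd m4)"
    "-3 < m1" "m1 < 3" "-3 < m2" "m2 < 3" "-3 < m3" "m3 < 3" "-3 < m4" "m4 < 3"
    "real_of_int (m1*m1 + m2*m2 + m3*m3 + m4*m4) = 4 * 2"
    apply (rule SN_coords[OF v, of 3])
    by (auto simp: power2_eq_square)
  have S: "m1*m1 + m2*m2 + m3*m3 + m4*m4 = 8" using m(11) by linarith
  from m(2) show "v \<in> set L2"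
  proof
    assume "even m1 \<and> even m2 \<and> even m3 \<and> even m4"
    then show ?thesis using enum2e[OF rng2e rng2e rng2e rng2e S] m by blast
  next
    assume "odd m1 \<and> odd m2 \<and> odd m3 \<and> odd m4"
    then show ?thesis using enum2o[OF rng2o rng2o rng2o rng2o S] m by blast
  qed
qed

lemma enum3e: "a \<in> {-2,0,2} \<Longrightarrow> b \<in> {-2,0,2} \<Longrightarrow> c \<in> {-2,0,2} \<Longrightarrow> d \<in> {-2,0,2} \<Longrightarrow>
  a*a+b*b+c*c+d*d = (12::int) \<Longrightarrow> (a,b,c,d) \<in> set I3"
  apply (simp only: insert_iff empty_iff simp_thms)
  apply (elim disjE)
  apply (simp_all add: I3_def)
  done

lemma enum3o: "a \<in> {-3,-1,1,3} \<Longrightarrow> b \<in> {-3,-1,1,3} \<Longrightarrow> c \<in> {-3,-1,1,3} \<Longrightarrow> d \<in> {-3,-1,1,3} \<Longrightarrow>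
  a*a+b*b+c*c+d*d = (12::int) \<Longrightarrow> (a,b,c,d) \<in> set I3"
  apply (simp only: insert_iff empty_iff simp_thms)
  apply (elim disjE)
  apply (simp_all add: I3_def)
  done

lemma rng3e: "even (m::int) \<Longrightarrow> -4 < m \<Longrightarrow> m < 4 \<Longrightarrow> m \<in> {-2,0,2}"
  by simp presburger

lemma rng3o: "odd (m::int) \<Longrightarrow> -4 < m \<Longrightarrow> m < 4 \<Longrightarrow> m \<in> {-3,-1,1,3}"
  by simp presburger

lemma SN3_sub: "SN 3 \<subseteq> set M3"
proof
  fix v assume v: "v \<in> SN 3"
  obtain m1 m2 m3 m4 :: int where m: "v = vec4 (of_int m1/2) (of_int m2/2) (of_int m3/2) (of_int m4/2)"
    "(even m1 \<and> even m2 \<and> even m3 \<and> even m4) \<or> (odd m1 \<and> odd m2 \<and> odd m3 \<and> odd m4)"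
    "-4 < m1" "m1 < 4" "-4 < m2" "m2 < 4" "-4 < m3" "m3 < 4" "-4 < m4" "m4 < 4"
    "real_of_int (m1*m1 + m2*m2 + m3*m3 + m4*m4) = 4 * 3"
    apply (rule SN_coords[OF v, of 4])
    by (auto simp: power2_eq_square)
  have S: "m1*m1 + m2*m2 + m3*m3 + m4*m4 = 12" using m(11) by linarith
  from m(2) show "v \<in> set M3"
  proof
    assume "even m1 \<and> even m2 \<and> even m3 \<and> even m4"
    then have "(m1,m2,m3,m4) \<in> set I3" using enum3e[OF rng3e rng3e rng3e rng3e S] m by blast
    then show ?thesis unfolding M3_def using m(1) by force
  next
    assume "odd m1 \<and> odd m2 \<and> odd m3 \<and> odd m4"
    then have "(m1,m2,m3,m4) \<in> set I3" using enum3o[OF rng3o rng3o rng3o rng3o S] m by blast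
    then show ?thesis unfolding M3_def using m(1) by force
  qed
qed

lemma enum6e: "a \<in> {-4,-2,0,2,4} \<Longrightarrow> b \<in> {-4,-2,0,2,4} \<Longrightarrow> c \<in> {-4,-2,0,2,4} \<Longrightarrow> d \<in> {-4,-2,0,2,4} \<Longrightarrow>
  a*a+b*b+c*c+d*d = (24::int) \<Longrightarrow> (a,b,c,d) \<in> set I6"
  apply (simp only: insert_iff empty_iff simp_thms)
  apply (elim disjE)
  apply (simp_all add: I6_def)
  done

lemma enum6o: "a \<in> {-3,-1,1,3} \<Longrightarrow> b \<in> {-3,-1,1,3} \<Longrightarrow> c \<in> {-3,-1,1,3} \<Longrightarrow> d \<in> {-3,-1,1,3} \<Longrightarrow>
  a*a+b*b+c*c+d*d = (24::int) \<Longrightarrow> (a,b,c,d) \<in> set I6"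
  apply (simp only: insert_iff empty_iff simp_thms)
  apply (elim disjE)
  apply (simp_all add: I6_def)
  done

lemma rng6e: "even (m::int) \<Longrightarrow> -5 < m \<Longrightarrow> m < 5 \<Longrightarrow> m \<in> {-4,-2,0,2,4}"
  by simp presburger

lemma rng6o: "odd (m::int) \<Longrightarrow> -5 < m \<Longrightarrow> m < 5 \<Longrightarrow> m \<in> {-3,-1,1,3}"
  by simp presburger

lemma SN6_sub: "SN 6 \<subseteq> set M6"
proof
  fix v assume v: "v \<in> SN 6"
  obtain m1 m2 m3 m4 :: int where m: "v = vec4 (of_int m1/2) (of_int m2/2) (of_int m3/2) (of_int m4/2)"
    "(even m1 \<and> even m2 \<and> even m3 \<and> even m4) \<or> (odd m1 \<and> odd m2 \<and> odd m3 \<and> odd m4)"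
    "-5 < m1" "m1 < 5" "-5 < m2" "m2 < 5" "-5 < m3" "m3 < 5" "-5 < m4" "m4 < 5"
    "real_of_int (m1*m1 + m2*m2 + m3*m3 + m4*m4) = 4 * 6"
    apply (rule SN_coords[OF v, of 5])
    by (auto simp: power2_eq_square)
  have S: "m1*m1 + m2*m2 + m3*m3 + m4*m4 = 24" using m(11) by linarith
  from m(2) show "v \<in> set M6"
  proof
    assume "even m1 \<and> even m2 \<and> even m3 \<and> even m4"
    then have "(m1,m2,m3,m4) \<in> set I6" using enum6e[OF rng6e rng6e rng6e rng6e S] m by blast
    then show ?thesis unfolding M6_def using m(1) by force
  next
    assume "odd m1 \<and> odd m2 \<and> odd m3 \<and> odd m4"
    then have "(m1,m2,m3,m4) \<in> set I6" using enum6o[OF rng6o rng6o rng6o rng6o S] m by blast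
    then show ?thesis unfolding M6_def using m(1) by force
  qed
qed



lemma dom_le:
  assumes "F4_dominant x"
    "vec4 1 1 0 0 \<bullet> v \<le> vec4 1 1 0 0 \<bullet> w" "vec4 2 1 1 0 \<bullet> v \<le> vec4 2 1 1 0 \<bullet> w"
    "vec4 (3/2) (1/2) (1/2) (1/2) \<bullet> v \<le> vec4 (3/2) (1/2) (1/2) (1/2) \<bullet> w" "vec4 1 0 0 0 \<bullet> v \<le> vec4 1 0 0 0 \<bullet> w"
  shows "x \<bullet> v \<le> x \<bullet> w"
proof -
  define p1 where "p1 = x$2 - x$3"
  define p2 where "p2 = x$3 - x$4"
  define p3 where "p3 = 2 * x$4"
  define p4 where "p4 = x$1 - x$2 - x$3 - x$4"
  have p: "p1 \<ge> 0" "p2 \<ge> 0" "p3 \<ge> 0" "p4 \<ge> 0" using assms(1) unfolding dominant_iff p1_def p2_def p3_def p4_def by auto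
  have xu: "x \<bullet> u = p1 * (vec4 1 1 0 0 \<bullet> u) + p2 * (vec4 2 1 1 0 \<bullet> u) + p3 * (vec4 (3/2) (1/2) (1/2) (1/2) \<bullet> u) + p4 * (vec4 1 0 0 0 \<bullet> u)" for u
    unfolding p1_def p2_def p3_def p4_def inner4 by (simp add: field_simps)
  have "x \<bullet> w - x \<bullet> v = p1 * (vec4 1 1 0 0 \<bullet> w - vec4 1 1 0 0 \<bullet> v) + p2 * (vec4 2 1 1 0 \<bullet> w - vec4 2 1 1 0 \<bullet> v)
     + p3 * (vec4 (3/2) (1/2) (1/2) (1/2) \<bullet> w - vec4 (3/2) (1/2) (1/2) (1/2) \<bullet> v) + p4 * (vec4 1 0 0 0 \<bullet> w - vec4 1 0 0 0 \<bullet> v)"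
    unfolding xu[of w] xu[of v] by (simp add: algebra_simps)
  also have "\<dots> \<ge> 0" using p assms(2-5) by (intro add_nonneg_nonneg mult_nonneg_nonneg) auto
  finally show ?thesis by simp
qed

lemma list1: "\<forall>v\<in>set L1. vec4 1 1 0 0 \<bullet> v \<le> 1 \<and> vec4 2 1 1 0 \<bullet> v \<le> 2 \<and> vec4 (3/2) (1/2) (1/2) (1/2) \<bullet> v \<le> 3/2 \<and> vec4 1 0 0 0 \<bullet> v \<le> 1"
  by (simp add: L1_def)
lemma list2: "\<forall>v\<in>set L2. vec4 1 1 0 0 \<bullet> v \<le> 2 \<and> vec4 2 1 1 0 \<bullet> v \<le> 3 \<and> vec4 (3/2) (1/2) (1/2) (1/2) \<bullet> v \<le> 2 \<and> vec4 1 0 0 0 \<bullet> v \<le> 1"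
  by (simp add: L2_def)
lemma list3: "\<forall>v\<in>set M3. vec4 1 1 0 0 \<bullet> v \<le> 2 \<and> vec4 2 1 1 0 \<bullet> v \<le> 4 \<and> vec4 (3/2) (1/2) (1/2) (1/2) \<bullet> v \<le> 3 \<and> vec4 1 0 0 0 \<bullet> v \<le> 3/2"
  by (simp add: M3_def I3_def)
lemma list6: "\<forall>v\<in>set M6. vec4 1 1 0 0 \<bullet> v \<le> 3 \<and> vec4 2 1 1 0 \<bullet> v \<le> 6 \<and> vec4 (3/2) (1/2) (1/2) (1/2) \<bullet> v \<le> 4 \<and> vec4 1 0 0 0 \<bullet> v \<le> 2"
  by (simp add: M6_def I6_def)

lemma bound1: assumes "F4_dominant x" "v \<in> SN 1" shows "x \<bullet> v \<le> x \<bullet> vec4 1 0 0 0"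
  using list1 SN1_sub assms(2) by (intro dom_le[OF assms(1)]) auto
lemma bound2: assumes "F4_dominant x" "v \<in> SN 2" shows "x \<bullet> v \<le> x \<bullet> vec4 1 1 0 0"
  using list2 SN2_sub assms(2) by (intro dom_le[OF assms(1)]) auto
lemma bound3: assumes "F4_dominant x" "v \<in> SN 3" shows "x \<bullet> v \<le> x \<bullet> vec4 (3/2) (1/2) (1/2) (1/2)"
  using list3 SN3_sub assms(2) by (intro dom_le[OF assms(1)]) auto
lemma bound6: assumes "F4_dominant x" "v \<in> SN 6" shows "x \<bullet> v \<le> x \<bullet> vec4 2 1 1 0"
  using list6 SN6_sub assms(2) by (intro dom_le[OF assms(1)]) auto

lemma w_in: "vec4 1 0 0 0 \<in> SN 1" "vec4 1 1 0 0 \<in> SN 2" "vec4 (3/2) (1/2) (1/2) (1/2) \<in> SN 3" "vec4 2 1 1 0 \<in> SN 6"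
  by (simp_all add: SN_def Lat_int Lat_half)

lemma img_eq_val:
  assumes "(\<lambda>v. x \<bullet> v) ` SN N = (\<lambda>v. y \<bullet> v) ` SN N" "w \<in> SN N"
    "\<forall>v\<in>SN N. x \<bullet> v \<le> x \<bullet> w" "\<forall>v\<in>SN N. y \<bullet> v \<le> y \<bullet> w"
  shows "x \<bullet> w = y \<bullet> w"
proof -
  have "y \<bullet> w \<in> (\<lambda>v. x \<bullet> v) ` SN N" using assms(1,2) by blast
  then have "y \<bullet> w \<le> x \<bullet> w" using assms(3) by auto
  moreover have "x \<bullet> w \<in> (\<lambda>v. y \<bullet> v) ` SN N" using assms(1,2) by (metis image_eqI)
  then have "x \<bullet> w \<le> y \<bullet> w" using assms(4) by auto
  ultimately show ?thesis by simp
qed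

lemma dom_unique:
  assumes "F4_dominant x" "F4_dominant y" "\<And>N. (\<lambda>v. x \<bullet> v) ` SN N = (\<lambda>v. y \<bullet> v) ` SN N"
  shows "x = y"
proof -
  have e1: "x \<bullet> vec4 1 0 0 0 = y \<bullet> vec4 1 0 0 0"
    using img_eq_val[OF assms(3) w_in(1)] bound1 assms(1,2) by blast
  have e2: "x \<bullet> vec4 1 1 0 0 = y \<bullet> vec4 1 1 0 0"
    using img_eq_val[OF assms(3) w_in(2)] bound2 assms(1,2) by blast
  have e3: "x \<bullet> vec4 (3/2) (1/2) (1/2) (1/2) = y \<bullet> vec4 (3/2) (1/2) (1/2) (1/2)"
    using img_eq_val[OF assms(3) w_in(3)] bound3 assms(1,2) by blast
  have e6: "x \<bullet> vec4 2 1 1 0 = y \<bullet> vec4 2 1 1 0"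
    using img_eq_val[OF assms(3) w_in(4)] bound6 assms(1,2) by blast
  have "x$1 = y$1" "x$2 = y$2" "x$3 = y$3" "x$4 = y$4"
    using e1 e2 e3 e6 by (simp_all add: inner4)
  then show ?thesis by (metis vec4_eta)
qed

lemma W_dom_unique:
  assumes "w1 \<in> F4_weyl" "w2 \<in> F4_weyl" "F4_dominant (w1 x)" "F4_dominant (w2 x)"
  shows "w1 x = w2 x"
  using dom_unique[OF assms(3,4)] W_img[OF assms(1)] W_img[OF assms(2)] by metis

definition rho :: "real^4" where "rho = vec4 (11/2) (5/2) (3/2) (1/2)"

lemma a1_root: "vec4 0 1 (-1) 0 \<in> F4_roots"
proof -
  have "vec4 0 1 (-1) 0 = (1::real) *\<^sub>R axis (2::4) 1 + (-1) *\<^sub>R axis 3 1"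
    by (simp add: vec_eq_iff forall_4 axis_def)
  moreover have "(2::4) \<noteq> 3" by simp
  ultimately show ?thesis unfolding F4_roots_def by blast
qed

lemma a2_root: "vec4 0 0 1 (-1) \<in> F4_roots"
proof -
  have "vec4 0 0 1 (-1) = (1::real) *\<^sub>R axis (3::4) 1 + (-1) *\<^sub>R axis 4 1"
    by (simp add: vec_eq_iff forall_4 axis_def)
  moreover have "(3::4) \<noteq> 4" by simp
  ultimately show ?thesis unfolding F4_roots_def by blast
qed

lemma a3_root: "vec4 0 0 0 1 \<in> F4_roots"
proof -
  have "vec4 0 0 0 1 = (1::real) *\<^sub>R axis (4::4) 1"
    by (simp add: vec_eq_iff forall_4 axis_def)
  then show ?thesis unfolding F4_roots_def by blast
qed

lemma a4_root: "vec4 (1/2) (-1/2) (-1/2) (-1/2) \<in> F4_roots"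
proof -
  have "\<forall>k. vec4 (1/2) (-1/2) (-1/2) (-1/2) $ k \<in> {-1/2, 1/2::real}"
    by (simp add: forall_4)
  then show ?thesis unfolding F4_roots_def by blast
qed

lemma refl_gain:
  assumes "a \<in> F4_roots" "Lat y" "y \<bullet> a < 0" "a \<bullet> rho \<ge> 1/2"
  shows "y \<bullet> rho + 1/2 \<le> refl a y \<bullet> rho"
proof -
  have r: "rootP a" using rootP assms(1) by blast
  have int: "y \<bullet> coroot a \<in> \<int>" using Lat_pair[OF assms(2)] r rootP_def by blast
  have aa: "a \<bullet> a > 0" using r rootP_def by auto
  have "y \<bullet> coroot a = (2 / (a \<bullet> a)) * (y \<bullet> a)" by (simp add: coroot_def)
  also have "\<dots> < 0" using aa assms(3) by (intro mult_pos_neg) auto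
  finally have neg: "y \<bullet> coroot a < 0" .
  have le: "y \<bullet> coroot a \<le> -1"
  proof -
    obtain k where k: "y \<bullet> coroot a = of_int k" using int Ints_cases by blast
    then have "k < 0" using neg by simp
    then have "k \<le> -1" by simp
    then show ?thesis using k by simp
  qed
  have "refl a y \<bullet> rho = y \<bullet> rho - (y \<bullet> coroot a) * (a \<bullet> rho)"
    by (simp add: refl_def inner_diff_left)
  moreover have "- (y \<bullet> coroot a) * (a \<bullet> rho) \<ge> 1 * (1/2)"
    using le assms(4) by (intro mult_mono) auto
  ultimately show ?thesis by simp
qed

lemma nondom_step:
  assumes "Lat y" "\<not> F4_dominant y"
  shows "\<exists>a \<in> F4_roots. y \<bullet> rho + 1/2 \<le> refl a y \<bullet> rho"
proof -
  from assms(2) consider "y$2 - y$3 < 0" | "y$3 - y$4 < 0" | "y$4 < 0" | "y$1 - y$2 - y$3 - y$4 < 0"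
    unfolding dominant_iff by linarith
  then show ?thesis
  proof cases
    case 1
    then have "y \<bullet> vec4 0 1 (-1) 0 < 0" "vec4 0 1 (-1) 0 \<bullet> rho \<ge> 1/2" by (simp_all add: inner4 rho_def)
    then show ?thesis using refl_gain[OF a1_root assms(1)] a1_root by blast
  next
    case 2
    then have "y \<bullet> vec4 0 0 1 (-1) < 0" "vec4 0 0 1 (-1) \<bullet> rho \<ge> 1/2" by (simp_all add: inner4 rho_def)
    then show ?thesis using refl_gain[OF a2_root assms(1)] a2_root by blast
  next
    case 3
    then have "y \<bullet> vec4 0 0 0 1 < 0" "vec4 0 0 0 1 \<bullet> rho \<ge> 1/2" by (simp_all add: inner4 rho_def)
    then show ?thesis using refl_gain[OF a3_root assms(1)] a3_root by blast
  next
    case 4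
    then have "y \<bullet> vec4 (1/2) (-1/2) (-1/2) (-1/2) < 0" "vec4 (1/2) (-1/2) (-1/2) (-1/2) \<bullet> rho \<ge> 1/2"
      by (simp_all add: inner4 rho_def) 
    then show ?thesis using refl_gain[OF a4_root assms(1)] a4_root by blast
  qed
qed

lemma exists_dom_aux:
  "\<forall>y. Lat y \<and> norm y = R \<and> R * norm rho - y \<bullet> rho < real n / 2 \<longrightarrow> (\<exists>w\<in>F4_weyl. F4_dominant (w y))"
proof (induction n)
  case 0
  show ?case
  proof (intro allI impI)
    fix y assume h: "Lat y \<and> norm y = R \<and> R * norm rho - y \<bullet> rho < real 0 / 2"
    have "y \<bullet> rho \<le> norm y * norm rho" by (rule norm_cauchy_schwarz)
    then show "\<exists>w\<in>F4_weyl. F4_dominant (w y)" using h by simp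
  qed
next
  case (Suc n)
  show ?case
  proof (intro allI impI)
    fix y assume h: "Lat y \<and> norm y = R \<and> R * norm rho - y \<bullet> rho < real (Suc n) / 2"
    show "\<exists>w\<in>F4_weyl. F4_dominant (w y)"
    proof (cases "F4_dominant y")
      case True
      show ?thesis
      proof (rule bexI[of _ id])
        show "F4_dominant (id y)" using True by simp
      qed (rule F4_weyl.id)
    next
      case False
      then obtain a where a: "a \<in> F4_roots" "y \<bullet> rho + 1/2 \<le> refl a y \<bullet> rho"
        using nondom_step h by blast
      have "Lat (refl a y)" using refl_Lat a(1) h by blast
      moreover have "norm (refl a y) = R" using W_norm[OF refl_W[OF a(1)]] h by simp
      moreover have "R * norm rho - refl a y \<bullet> rho < real n / 2" using a(2) h by simp
      ultimately obtain w where w: "w \<in> F4_weyl" "F4_dominant (w (refl a y))"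
        using Suc.IH by blast
      have "w \<circ> refl a \<in> F4_weyl" using W_comp w(1) a(1) by blast
      moreover have "F4_dominant ((w \<circ> refl a) y)" using w(2) by simp
      ultimately show ?thesis by blast
    qed
  qed
qed

lemma exists_dom: assumes "Lat x" shows "\<exists>w\<in>F4_weyl. F4_dominant (w x)"
proof -
  define n where "n = nat (ceiling (2 * (norm x * norm rho - x \<bullet> rho))) + 1"
  have "norm x * norm rho - x \<bullet> rho < real n / 2"
    unfolding n_def using real_nat_ceiling_ge[of "2 * (norm x * norm rho - x \<bullet> rho)"] by simp
  then show ?thesis using exists_dom_aux[of "norm x" n] assms by blast
qed



definition omega :: "nat \<Rightarrow> real^4" where
  "omega j = (if j = 1 then vec4 1 1 0 0 else if j = 2 then vec4 2 1 1 0 else if j = 3 then vec4 (3/2) (1/2) (1/2) (1/2) else vec4 1 0 0 0)"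

definition Nn :: "nat \<Rightarrow> real" where
  "Nn j = (if j = 1 then 2 else if j = 2 then 6 else if j = 3 then 3 else 1)"

definition Res :: "nat \<Rightarrow> nat \<Rightarrow> (real^4) set" where
  "Res i j = (if i = 2 \<and> j = 2 then {vec4 2 0 (-1) 1, vec4 1 0 (-2) 1, vec4 0 (-1) (-2) 1} else if i = 2 \<and> j = 3 then {vec4 (3/2) (1/2) (-1/2) (1/2), vec4 1 0 (-1) 1, vec4 (1/2) (1/2) (-3/2) (1/2), vec4 (1/2) (-1/2) (-3/2) (1/2), vec4 (-1/2) (-1/2) (-3/2) (1/2)} else if i = 3 \<and> j = 2 then {vec4 2 1 0 (-1), vec4 1 1 0 (-2), vec4 1 0 (-1) (-2), vec4 0 1 (-1) (-2), vec4 (-1) 0 (-1) (-2)} else if i = 3 \<and> j = 3 then {vec4 1 1 0 (-1), vec4 (1/2) (1/2) (-1/2) (-3/2), vec4 (-1/2) (1/2) (-1/2) (-3/2)} else {})"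

lemma omega_SN: "j \<in> {1..4} \<Longrightarrow> omega j \<in> SN (Nn j)"
  using w_in by (auto simp: omega_def Nn_def)

lemma sr_inj: "k \<in> {1..4} \<Longrightarrow> j \<in> {1..4} \<Longrightarrow> F4_simple_root k = F4_simple_root j \<longleftrightarrow> k = j"
  by (auto simp: F4_simple_root_def)

lemma sr_in: "k \<in> {1..4} \<Longrightarrow> F4_simple_root k \<in> F4_simple_roots"
  by (simp add: F4_simple_roots_def)

lemma four_cases: "(k::nat) \<in> {1..4} \<Longrightarrow> k = 1 \<or> k = 2 \<or> k = 3 \<or> k = 4"
  by auto

lemma mu_form:
  assumes "j \<in> {1..4}" "\<forall>k\<in>{1..4}. k \<noteq> j \<longrightarrow> mu \<bullet> F4_simple_root k = 0" "mu \<bullet> F4_simple_root j > 0"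
  shows "\<exists>c>0. mu = c *\<^sub>R omega j"
proof -
  have z: "\<And>k. k \<in> {1..4} \<Longrightarrow> k \<noteq> j \<Longrightarrow> mu \<bullet> F4_simple_root k = 0" using assms(2) by blast
  consider "j = 1" | "j = 2" | "j = 3" | "j = 4" using four_cases[OF assms(1)] by blast
  then show ?thesis
  proof cases
    case 1
    have "mu$3 - mu$4 = 0" "mu$4 = 0" "mu$1 - mu$2 - mu$3 - mu$4 = 0" "mu$2 - mu$3 > 0"
      using z[of 2] z[of 3] z[of 4] assms(3) 1 by (auto simp: F4_simple_root_def inner4 field_simps)
    then have "mu = (mu$2) *\<^sub>R omega j" "mu$2 > 0" using 1 vec4_eta[of mu] by (auto simp: omega_def)
    then show ?thesis by blast
  next
    case 2
    have "mu$2 - mu$3 = 0" "mu$4 = 0" "mu$1 - mu$2 - mu$3 - mu$4 = 0" "mu$3 - mu$4 > 0"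
      using z[of 1] z[of 3] z[of 4] assms(3) 2 by (auto simp: F4_simple_root_def inner4 field_simps)
    then have "mu = (mu$3) *\<^sub>R omega j" "mu$3 > 0" using 2 vec4_eta[of mu] by (auto simp: omega_def algebra_simps)
    then show ?thesis by blast
  next
    case 3
    have "mu$2 - mu$3 = 0" "mu$3 - mu$4 = 0" "mu$1 - mu$2 - mu$3 - mu$4 = 0" "mu$4 > 0"
      using z[of 1] z[of 2] z[of 4] assms(3) 3 by (auto simp: F4_simple_root_def inner4 field_simps)
    then have "mu = (2 * mu$4) *\<^sub>R omega j" "2 * mu$4 > 0" using 3 vec4_eta[of mu] by (auto simp: omega_def algebra_simps)
    then show ?thesis by blast
  next
    case 4
    have "mu$2 - mu$3 = 0" "mu$3 - mu$4 = 0" "mu$4 = 0" "mu$1 - mu$2 - mu$3 - mu$4 > 0"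
      using z[of 1] z[of 2] z[of 3] assms(3) 4 by (auto simp: F4_simple_root_def inner4 field_simps)
    then have "mu = (mu$1) *\<^sub>R omega j" "mu$1 > 0" using 4 vec4_eta[of mu] by (auto simp: omega_def)
    then show ?thesis by blast
  qed
qed

lemma cls_1_1: "\<forall>v\<in>set L2. v \<bullet> vec4 0 0 1 (-1) > 0 \<and> v \<bullet> vec4 0 0 0 1 > 0 \<and> v \<bullet> vec4 (1/2) (-1/2) (-1/2) (-1/2) > 0 \<longrightarrow> v \<in> {}"
  by (simp add: L2_def)

lemma cls_2_1: "\<forall>v\<in>set L2. v \<bullet> vec4 0 1 (-1) 0 > 0 \<and> v \<bullet> vec4 0 0 0 1 > 0 \<and> v \<bullet> vec4 (1/2) (-1/2) (-1/2) (-1/2) > 0 \<longrightarrow> v \<in> {}"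
  by (simp add: L2_def)

lemma cls_3_1: "\<forall>v\<in>set L2. v \<bullet> vec4 0 1 (-1) 0 > 0 \<and> v \<bullet> vec4 0 0 1 (-1) > 0 \<and> v \<bullet> vec4 (1/2) (-1/2) (-1/2) (-1/2) > 0 \<longrightarrow> v \<in> {}"
  by (simp add: L2_def)

lemma cls_4_1: "\<forall>v\<in>set L2. v \<bullet> vec4 0 1 (-1) 0 > 0 \<and> v \<bullet> vec4 0 0 1 (-1) > 0 \<and> v \<bullet> vec4 0 0 0 1 > 0 \<longrightarrow> v \<in> {}"
  by (simp add: L2_def)

lemma cls_1_2: "\<forall>v\<in>set M6. v \<bullet> vec4 0 0 1 (-1) > 0 \<and> v \<bullet> vec4 0 0 0 1 > 0 \<and> v \<bullet> vec4 (1/2) (-1/2) (-1/2) (-1/2) > 0 \<longrightarrow> v \<in> {}"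
  by (simp add: M6_def I6_def)

lemma cls_2_2: "\<forall>v\<in>set M6. v \<bullet> vec4 0 1 (-1) 0 > 0 \<and> v \<bullet> vec4 0 0 0 1 > 0 \<and> v \<bullet> vec4 (1/2) (-1/2) (-1/2) (-1/2) > 0 \<longrightarrow> v \<in> {vec4 2 0 (-1) 1, vec4 1 0 (-2) 1, vec4 0 (-1) (-2) 1}"
  by (simp add: M6_def I6_def)

lemma cls_3_2: "\<forall>v\<in>set M6. v \<bullet> vec4 0 1 (-1) 0 > 0 \<and> v \<bullet> vec4 0 0 1 (-1) > 0 \<and> v \<bullet> vec4 (1/2) (-1/2) (-1/2) (-1/2) > 0 \<longrightarrow> v \<in> {vec4 2 1 0 (-1), vec4 1 1 0 (-2), vec4 1 0 (-1) (-2), vec4 0 1 (-1) (-2), vec4 (-1) 0 (-1) (-2)}"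
  by (simp add: M6_def I6_def)

lemma cls_4_2: "\<forall>v\<in>set M6. v \<bullet> vec4 0 1 (-1) 0 > 0 \<and> v \<bullet> vec4 0 0 1 (-1) > 0 \<and> v \<bullet> vec4 0 0 0 1 > 0 \<longrightarrow> v \<in> {}"
  by (simp add: M6_def I6_def)

lemma cls_1_3: "\<forall>v\<in>set M3. v \<bullet> vec4 0 0 1 (-1) > 0 \<and> v \<bullet> vec4 0 0 0 1 > 0 \<and> v \<bullet> vec4 (1/2) (-1/2) (-1/2) (-1/2) > 0 \<longrightarrow> v \<in> {}"
  by (simp add: M3_def I3_def)

lemma cls_2_3: "\<forall>v\<in>set M3. v \<bullet> vec4 0 1 (-1) 0 > 0 \<and> v \<bullet> vec4 0 0 0 1 > 0 \<and> v \<bullet> vec4 (1/2) (-1/2) (-1/2) (-1/2) > 0 \<longrightarrow> v \<in> {vec4 (3/2) (1/2) (-1/2) (1/2), vec4 1 0 (-1) 1, vec4 (1/2) (1/2) (-3/2) (1/2), vec4 (1/2) (-1/2) (-3/2) (1/2), vec4 (-1/2) (-1/2) (-3/2) (1/2)}"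
  by (simp add: M3_def I3_def)

lemma cls_3_3: "\<forall>v\<in>set M3. v \<bullet> vec4 0 1 (-1) 0 > 0 \<and> v \<bullet> vec4 0 0 1 (-1) > 0 \<and> v \<bullet> vec4 (1/2) (-1/2) (-1/2) (-1/2) > 0 \<longrightarrow> v \<in> {vec4 1 1 0 (-1), vec4 (1/2) (1/2) (-1/2) (-3/2), vec4 (-1/2) (1/2) (-1/2) (-3/2)}"
  by (simp add: M3_def I3_def)

lemma cls_4_3: "\<forall>v\<in>set M3. v \<bullet> vec4 0 1 (-1) 0 > 0 \<and> v \<bullet> vec4 0 0 1 (-1) > 0 \<and> v \<bullet> vec4 0 0 0 1 > 0 \<longrightarrow> v \<in> {}"
  by (simp add: M3_def I3_def)

lemma cls_1_4: "\<forall>v\<in>set L1. v \<bullet> vec4 0 0 1 (-1) > 0 \<and> v \<bullet> vec4 0 0 0 1 > 0 \<and> v \<bullet> vec4 (1/2) (-1/2) (-1/2) (-1/2) > 0 \<longrightarrow> v \<in> {}"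
  by (simp add: L1_def)

lemma cls_2_4: "\<forall>v\<in>set L1. v \<bullet> vec4 0 1 (-1) 0 > 0 \<and> v \<bullet> vec4 0 0 0 1 > 0 \<and> v \<bullet> vec4 (1/2) (-1/2) (-1/2) (-1/2) > 0 \<longrightarrow> v \<in> {}"
  by (simp add: L1_def)

lemma cls_3_4: "\<forall>v\<in>set L1. v \<bullet> vec4 0 1 (-1) 0 > 0 \<and> v \<bullet> vec4 0 0 1 (-1) > 0 \<and> v \<bullet> vec4 (1/2) (-1/2) (-1/2) (-1/2) > 0 \<longrightarrow> v \<in> {}"
  by (simp add: L1_def)

lemma cls_4_4: "\<forall>v\<in>set L1. v \<bullet> vec4 0 1 (-1) 0 > 0 \<and> v \<bullet> vec4 0 0 1 (-1) > 0 \<and> v \<bullet> vec4 0 0 0 1 > 0 \<longrightarrow> v \<in> {}"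
  by (simp add: L1_def)

lemma classify:
  assumes "i \<in> {1..4}" "j \<in> {1..4}" "v \<in> SN (Nn j)" "\<forall>k\<in>{1..4}. k \<noteq> i \<longrightarrow> v \<bullet> F4_simple_root k > 0"
  shows "v \<in> Res i j"
proof -
  have p: "\<And>k. k \<in> {1..4} \<Longrightarrow> k \<noteq> i \<Longrightarrow> v \<bullet> F4_simple_root k > 0" using assms(4) by blast
  have p1: "i \<noteq> 1 \<Longrightarrow> v \<bullet> vec4 0 1 (-1) 0 > 0" using p[of 1] by (simp add: F4_simple_root_def)
  have p2: "i \<noteq> 2 \<Longrightarrow> v \<bullet> vec4 0 0 1 (-1) > 0" using p[of 2] by (simp add: F4_simple_root_def)
  have p3: "i \<noteq> 3 \<Longrightarrow> v \<bullet> vec4 0 0 0 1 > 0" using p[of 3] by (simp add: F4_simple_root_def)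
  have p4: "i \<noteq> 4 \<Longrightarrow> v \<bullet> vec4 (1/2) (-1/2) (-1/2) (-1/2) > 0" using p[of 4] by (simp add: F4_simple_root_def)
  have s1: "v \<in> set L1" if "j = 4" using assms(3) SN1_sub that by (auto simp: Nn_def)
  have s2: "v \<in> set L2" if "j = 1" using assms(3) SN2_sub that by (auto simp: Nn_def)
  have s3: "v \<in> set M3" if "j = 3" using assms(3) SN3_sub that by (auto simp: Nn_def)
  have s6: "v \<in> set M6" if "j = 2" using assms(3) SN6_sub that by (auto simp: Nn_def)
  consider "i = 1" | "i = 2" | "i = 3" | "i = 4" using four_cases[OF assms(1)] by blast
  then show ?thesis
  proof cases
    case 1
    consider "j = 1" | "j = 2" | "j = 3" | "j = 4" using four_cases[OF assms(2)] by blast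
    then show ?thesis
    proof cases
      case 1
      then show ?thesis using cls_1_1 s2 p2 p3 p4 \<open>i = 1\<close> by (simp add: Res_def)
    next
      case 2
      then show ?thesis using cls_1_2 s6 p2 p3 p4 \<open>i = 1\<close> by (simp add: Res_def)
    next
      case 3
      then show ?thesis using cls_1_3 s3 p2 p3 p4 \<open>i = 1\<close> by (simp add: Res_def)
    next
      case 4
      then show ?thesis using cls_1_4 s1 p2 p3 p4 \<open>i = 1\<close> by (simp add: Res_def)
    qed
  next
    case 2
    consider "j = 1" | "j = 2" | "j = 3" | "j = 4" using four_cases[OF assms(2)] by blast
    then show ?thesis
    proof cases
      case 1
      then show ?thesis using cls_2_1 s2 p1 p3 p4 \<open>i = 2\<close> by (simp add: Res_def)
    next
      case 2
      then show ?thesis using cls_2_2 s6 p1 p3 p4 \<open>i = 2\<close> by (simp add: Res_def)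
    next
      case 3
      then show ?thesis using cls_2_3 s3 p1 p3 p4 \<open>i = 2\<close> by (simp add: Res_def)
    next
      case 4
      then show ?thesis using cls_2_4 s1 p1 p3 p4 \<open>i = 2\<close> by (simp add: Res_def)
    qed
  next
    case 3
    consider "j = 1" | "j = 2" | "j = 3" | "j = 4" using four_cases[OF assms(2)] by blast
    then show ?thesis
    proof cases
      case 1
      then show ?thesis using cls_3_1 s2 p1 p2 p4 \<open>i = 3\<close> by (simp add: Res_def)
    next
      case 2
      then show ?thesis using cls_3_2 s6 p1 p2 p4 \<open>i = 3\<close> by (simp add: Res_def)
    next
      case 3
      then show ?thesis using cls_3_3 s3 p1 p2 p4 \<open>i = 3\<close> by (simp add: Res_def)
    next
      case 4
      then show ?thesis using cls_3_4 s1 p1 p2 p4 \<open>i = 3\<close> by (simp add: Res_def)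
    qed
  next
    case 4
    consider "j = 1" | "j = 2" | "j = 3" | "j = 4" using four_cases[OF assms(2)] by blast
    then show ?thesis
    proof cases
      case 1
      then show ?thesis using cls_4_1 s2 p1 p2 p3 \<open>i = 4\<close> by (simp add: Res_def)
    next
      case 2
      then show ?thesis using cls_4_2 s6 p1 p2 p3 \<open>i = 4\<close> by (simp add: Res_def)
    next
      case 3
      then show ?thesis using cls_4_3 s3 p1 p2 p3 \<open>i = 4\<close> by (simp add: Res_def)
    next
      case 4
      then show ?thesis using cls_4_4 s1 p1 p2 p3 \<open>i = 4\<close> by (simp add: Res_def)
    qed
  qed
qed

lemma axis_root1: assumes "(s::real) \<in> {-1,1}" shows "s *\<^sub>R axis k 1 \<in> F4_roots"
proof -
  have "s *\<^sub>R axis k 1 \<in> {s *\<^sub>R axis k 1 | s k. s \<in> {-1, 1::real}}"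
    unfolding mem_Collect_eq by (rule exI[of _ s], rule exI[of _ k]) (use assms in simp)
  then show ?thesis unfolding F4_roots_def by (rule UnI1[THEN UnI1])
qed

lemma axis_root2: assumes "(k::4) \<noteq> l" "(s::real) \<in> {-1,1}" "t \<in> {-1,1}"
  shows "s *\<^sub>R axis k 1 + t *\<^sub>R axis l 1 \<in> F4_roots"
proof -
  have "s *\<^sub>R axis k 1 + t *\<^sub>R axis l 1 \<in> {s *\<^sub>R axis k 1 + t *\<^sub>R axis l 1 | s t k l. k \<noteq> l \<and> s \<in> {-1, 1::real} \<and> t \<in> {-1, 1}}"
    unfolding mem_Collect_eq by (rule exI[of _ s], rule exI[of _ t], rule exI[of _ k], rule exI[of _ l]) (use assms in simp)
  then show ?thesis unfolding F4_roots_def by (rule UnI2[THEN UnI1])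
qed
lemma integral_facts:
  assumes "F4_integral x"
  shows "2 * x$1 \<in> \<int>" "x$2 - x$1 \<in> \<int>" "x$3 - x$1 \<in> \<int>" "x$4 - x$1 \<in> \<int>"
proof -
  have r: "\<And>a. a \<in> F4_roots \<Longrightarrow> x \<bullet> coroot a \<in> \<int>" using assms F4_integral_def by blast
  have "vec4 1 0 0 0 = (1::real) *\<^sub>R axis (1::4) 1" by (simp add: vec_eq_iff forall_4 axis_def)
  then have "x \<bullet> coroot (vec4 1 0 0 0) \<in> \<int>" using r axis_root1[of 1 1] by simp
  then show "2 * x$1 \<in> \<int>" by (simp add: coroot_def inner4 mult.commute)
  have "vec4 (-1) 1 0 0 = (1::real) *\<^sub>R axis (2::4) 1 + (-1) *\<^sub>R axis 1 1" by (simp add: vec_eq_iff forall_4 axis_def)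
  then have "x \<bullet> coroot (vec4 (-1) 1 0 0) \<in> \<int>" using r axis_root2[of 2 1 1 "-1"] by simp
  then show "x$2 - x$1 \<in> \<int>" by (simp add: coroot_def inner4)
  have "vec4 (-1) 0 1 0 = (1::real) *\<^sub>R axis (3::4) 1 + (-1) *\<^sub>R axis 1 1" by (simp add: vec_eq_iff forall_4 axis_def)
  then have "x \<bullet> coroot (vec4 (-1) 0 1 0) \<in> \<int>" using r axis_root2[of 3 1 1 "-1"] by simp
  then show "x$3 - x$1 \<in> \<int>" by (simp add: coroot_def inner4)
  have "vec4 (-1) 0 0 1 = (1::real) *\<^sub>R axis (4::4) 1 + (-1) *\<^sub>R axis 1 1" by (simp add: vec_eq_iff forall_4 axis_def)
  then have "x \<bullet> coroot (vec4 (-1) 0 0 1) \<in> \<int>" using r axis_root2[of 4 1 1 "-1"] by simp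
  then show "x$4 - x$1 \<in> \<int>" by (simp add: coroot_def inner4)
qed

lemma facts_Lat:
  assumes "2 * x$1 \<in> \<int>" "x$2 - x$1 \<in> \<int>" "x$3 - x$1 \<in> \<int>" "x$4 - x$1 \<in> \<int>"
  shows "Lat x"
  unfolding Lat_def
  apply (rule exI[of _ "x - (2 * x$1) *\<^sub>R h4"], rule exI[of _ "2 * x$1"])
  using assms by (simp add: h4_def)

lemma Res_all: "v \<in> Res i j \<Longrightarrow> v \<in> {vec4 2 0 (-1) 1, vec4 1 0 (-2) 1, vec4 0 (-1) (-2) 1, vec4 (3/2) (1/2) (-1/2) (1/2), vec4 1 0 (-1) 1, vec4 (1/2) (1/2) (-3/2) (1/2), vec4 (1/2) (-1/2) (-3/2) (1/2), vec4 (-1/2) (-1/2) (-3/2) (1/2), vec4 2 1 0 (-1), vec4 1 1 0 (-2), vec4 1 0 (-1) (-2), vec4 0 1 (-1) (-2), vec4 (-1) 0 (-1) (-2), vec4 1 1 0 (-1), vec4 (1/2) (1/2) (-1/2) (-3/2), vec4 (-1/2) (1/2) (-1/2) (-3/2)}"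
  unfolding Res_def by (simp split: if_splits; elim disjE; simp)

lemma cint_lemma:
  assumes "v \<in> Res i j" "2 * (c * v$1) \<in> \<int>" "c * v$2 - c * v$1 \<in> \<int>" "c * v$3 - c * v$1 \<in> \<int>" "c * v$4 - c * v$1 \<in> \<int>"
  shows "c \<in> \<int>"
proof -
  have "v \<in> {vec4 2 0 (-1) 1, vec4 1 0 (-2) 1, vec4 0 (-1) (-2) 1, vec4 (3/2) (1/2) (-1/2) (1/2), vec4 1 0 (-1) 1, vec4 (1/2) (1/2) (-3/2) (1/2), vec4 (1/2) (-1/2) (-3/2) (1/2), vec4 (-1/2) (-1/2) (-3/2) (1/2), vec4 2 1 0 (-1), vec4 1 1 0 (-2), vec4 1 0 (-1) (-2), vec4 0 1 (-1) (-2), vec4 (-1) 0 (-1) (-2), vec4 1 1 0 (-1), vec4 (1/2) (1/2) (-1/2) (-3/2), vec4 (-1/2) (1/2) (-1/2) (-3/2)}" using Res_all[OF assms(1)] .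
  then show ?thesis using assms(2-5)
    apply (simp only: insert_iff empty_iff simp_thms)
    apply (elim disjE)
    apply (simp_all add: algebra_simps)
    done
qed
lemma sr_pos: "k \<in> {1..4} \<Longrightarrow> F4_simple_root k \<bullet> F4_simple_root k > 0"
  by (auto simp: F4_simple_root_def)

lemma final_concl:
  assumes "v \<in> Res i j" "lam = real n *\<^sub>R v"
  shows "((i = 2 \<and> j = 2 \<and> lam \<in> (\<lambda>\<mu>. real n *\<^sub>R \<mu>) `
        {vec4 2 0 (-1) 1, vec4 1 0 (-2) 1, vec4 0 (-1) (-2) 1})
   \<or> (i = 2 \<and> j = 3 \<and> lam \<in> (\<lambda>\<mu>. real n *\<^sub>R \<mu>) `
        {vec4 (3/2) (1/2) (-1/2) (1/2), vec4 1 0 (-1) 1, vec4 (1/2) (1/2) (-3/2) (1/2),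
         vec4 (1/2) (-1/2) (-3/2) (1/2), vec4 (-1/2) (-1/2) (-3/2) (1/2)})
   \<or> (i = 3 \<and> j = 2 \<and> lam \<in> (\<lambda>\<mu>. real n *\<^sub>R \<mu>) `
        {vec4 2 1 0 (-1), vec4 1 1 0 (-2), vec4 1 0 (-1) (-2), vec4 0 1 (-1) (-2),
         vec4 (-1) 0 (-1) (-2)})
   \<or> (i = 3 \<and> j = 3 \<and> lam \<in> (\<lambda>\<mu>. real n *\<^sub>R \<mu>) `
        {vec4 1 1 0 (-1), vec4 (1/2) (1/2) (-1/2) (-3/2), vec4 (-1/2) (1/2) (-1/2) (-3/2)}))"
proof -
  have im: "\<And>S. v \<in> S \<Longrightarrow> lam \<in> (\<lambda>\<mu>. real n *\<^sub>R \<mu>) ` S" using assms(2) by blast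
  show ?thesis
  proof (cases "i = 2 \<and> j = 2")
    case True
    have "lam \<in> (\<lambda>\<mu>. real n *\<^sub>R \<mu>) ` Res 2 2" using im assms(1) True by auto
    moreover have "Res 2 2 = {vec4 2 0 (-1) 1, vec4 1 0 (-2) 1, vec4 0 (-1) (-2) 1}" by (simp add: Res_def)
    ultimately have "lam \<in> (\<lambda>\<mu>. real n *\<^sub>R \<mu>) ` {vec4 2 0 (-1) 1, vec4 1 0 (-2) 1, vec4 0 (-1) (-2) 1}" by (simp only:)
    then show ?thesis using True by blast
  next
    case F1: False
    show ?thesis
    proof (cases "i = 2 \<and> j = 3")
      case True
      have "lam \<in> (\<lambda>\<mu>. real n *\<^sub>R \<mu>) ` Res 2 3" using im assms(1) True by auto
    moreover have "Res 2 3 = {vec4 (3/2) (1/2) (-1/2) (1/2), vec4 1 0 (-1) 1, vec4 (1/2) (1/2) (-3/2) (1/2), vec4 (1/2) (-1/2) (-3/2) (1/2), vec4 (-1/2) (-1/2) (-3/2) (1/2)}" by (simp add: Res_def)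
    ultimately have "lam \<in> (\<lambda>\<mu>. real n *\<^sub>R \<mu>) ` {vec4 (3/2) (1/2) (-1/2) (1/2), vec4 1 0 (-1) 1, vec4 (1/2) (1/2) (-3/2) (1/2), vec4 (1/2) (-1/2) (-3/2) (1/2), vec4 (-1/2) (-1/2) (-3/2) (1/2)}" by (simp only:)
    then show ?thesis using True by blast
    next
      case F2: False
      show ?thesis
      proof (cases "i = 3 \<and> j = 2")
        case True
        have "lam \<in> (\<lambda>\<mu>. real n *\<^sub>R \<mu>) ` Res 3 2" using im assms(1) True by auto
    moreover have "Res 3 2 = {vec4 2 1 0 (-1), vec4 1 1 0 (-2), vec4 1 0 (-1) (-2), vec4 0 1 (-1) (-2), vec4 (-1) 0 (-1) (-2)}" by (simp add: Res_def)
    ultimately have "lam \<in> (\<lambda>\<mu>. real n *\<^sub>R \<mu>) ` {vec4 2 1 0 (-1), vec4 1 1 0 (-2), vec4 1 0 (-1) (-2), vec4 0 1 (-1) (-2), vec4 (-1) 0 (-1) (-2)}" by (simp only:)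
    then show ?thesis using True by blast
      next
        case F3: False
        show ?thesis
        proof (cases "i = 3 \<and> j = 3")
          case True
          have "lam \<in> (\<lambda>\<mu>. real n *\<^sub>R \<mu>) ` Res 3 3" using im assms(1) True by auto
    moreover have "Res 3 3 = {vec4 1 1 0 (-1), vec4 (1/2) (1/2) (-1/2) (-3/2), vec4 (-1/2) (1/2) (-1/2) (-3/2)}" by (simp add: Res_def)
    ultimately have "lam \<in> (\<lambda>\<mu>. real n *\<^sub>R \<mu>) ` {vec4 1 1 0 (-1), vec4 (1/2) (1/2) (-1/2) (-3/2), vec4 (-1/2) (1/2) (-1/2) (-3/2)}" by (simp only:)
    then show ?thesis using True by blast
        next
          case False
          then have "Res i j = {}" using F1 F2 F3 unfolding Res_def by simp
          then show ?thesis using assms(1) by blast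
        qed
      qed
    qed
  qed
qed

theorem theorem5p12:
  fixes i j :: nat and lam :: "real^4"
  assumes "i \<in> {1..4}" and "j \<in> {1..4}"
    and "F4_basic_system i j"
    and "F4_basic_weight i j lam"
  shows "\<exists>n::nat. n > 0 \<and>
    ((i = 2 \<and> j = 2 \<and> lam \<in> (\<lambda>\<mu>. real n *\<^sub>R \<mu>) `
        {vec4 2 0 (-1) 1, vec4 1 0 (-2) 1, vec4 0 (-1) (-2) 1})
   \<or> (i = 2 \<and> j = 3 \<and> lam \<in> (\<lambda>\<mu>. real n *\<^sub>R \<mu>) `
        {vec4 (3/2) (1/2) (-1/2) (1/2), vec4 1 0 (-1) 1, vec4 (1/2) (1/2) (-3/2) (1/2),
         vec4 (1/2) (-1/2) (-3/2) (1/2), vec4 (-1/2) (-1/2) (-3/2) (1/2)})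
   \<or> (i = 3 \<and> j = 2 \<and> lam \<in> (\<lambda>\<mu>. real n *\<^sub>R \<mu>) `
        {vec4 2 1 0 (-1), vec4 1 1 0 (-2), vec4 1 0 (-1) (-2), vec4 0 1 (-1) (-2),
         vec4 (-1) 0 (-1) (-2)})
   \<or> (i = 3 \<and> j = 3 \<and> lam \<in> (\<lambda>\<mu>. real n *\<^sub>R \<mu>) `
        {vec4 1 1 0 (-1), vec4 (1/2) (1/2) (-1/2) (-3/2), vec4 (-1/2) (1/2) (-1/2) (-3/2)}))"
proof -
  have int: "F4_integral lam"
    and pos: "\<forall>\<alpha> \<in> F4_simple_roots - {F4_simple_root i}. lam \<bullet> coroot \<alpha> \<in> \<int> \<and> lam \<bullet> coroot \<alpha> > 0"
    and setc: "{\<alpha> \<in> F4_simple_roots. F4_dominant_rep lam \<bullet> \<alpha> = 0} = F4_simple_roots - {F4_simple_root j}"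
    using assms(4) unfolding F4_basic_weight_def by auto
  note ints = integral_facts[OF int]
  have L: "Lat lam" using facts_Lat[OF ints] .
  obtain w0 where w0: "w0 \<in> F4_weyl" "F4_dominant (w0 lam)" using exists_dom[OF L] by blast
  have rep: "F4_dominant_rep lam = w0 lam" unfolding F4_dominant_rep_def
  proof (rule the_equality)
    show "w0 lam \<in> (\<lambda>w. w lam) ` F4_weyl \<and> F4_dominant (w0 lam)" using w0 by blast
  next
    fix mu assume "mu \<in> (\<lambda>w. w lam) ` F4_weyl \<and> F4_dominant mu"
    then obtain w where w: "w \<in> F4_weyl" "mu = w lam" "F4_dominant mu" by blast
    then show "mu = w0 lam" using W_dom_unique[OF w(1) w0(1)] w0(2) by blast
  qed
  define mu where "mu = w0 lam"
  have setc': "{\<alpha> \<in> F4_simple_roots. mu \<bullet> \<alpha> = 0} = F4_simple_roots - {F4_simple_root j}"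
    using setc rep mu_def by simp
  have zero: "\<forall>k\<in>{1..4}. k \<noteq> j \<longrightarrow> mu \<bullet> F4_simple_root k = 0"
  proof (intro ballI impI)
    fix k :: nat assume k: "k \<in> {1..4}" "k \<noteq> j"
    have "F4_simple_root k \<in> F4_simple_roots - {F4_simple_root j}"
      using sr_in[OF k(1)] sr_inj[OF k(1) assms(2)] k(2) by blast
    then show "mu \<bullet> F4_simple_root k = 0" using setc' by blast
  qed
  have nz: "mu \<bullet> F4_simple_root j \<noteq> 0"
  proof
    assume "mu \<bullet> F4_simple_root j = 0"
    then have "F4_simple_root j \<in> {\<alpha> \<in> F4_simple_roots. mu \<bullet> \<alpha> = 0}" using sr_in[OF assms(2)] by blast
    then show False using setc' by blast
  qed
  have ge: "mu \<bullet> F4_simple_root j \<ge> 0"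
    using w0(2) sr_in[OF assms(2)] unfolding mu_def F4_dominant_def by blast
  obtain c where c: "c > 0" "mu = c *\<^sub>R omega j"
    using mu_form[OF assms(2) zero] nz ge by force
  obtain u where u: "u \<in> F4_weyl" "\<forall>x. u (w0 x) = x" using W_inv[OF w0(1)] by blast
  define v where "v = u (omega j)"
  have lam_eq: "lam = c *\<^sub>R v"
  proof -
    have "lam = u mu" using u(2) mu_def by simp
    also have "\<dots> = c *\<^sub>R v" using c(2) W_scale[OF u(1)] v_def by simp
    finally show ?thesis .
  qed
  have vSN: "v \<in> SN (Nn j)"
    using omega_SN[OF assms(2)] W_Lat[OF u(1)] W_inner[OF u(1)] unfolding v_def SN_def by auto
  have vpos: "\<forall>k\<in>{1..4}. k \<noteq> i \<longrightarrow> v \<bullet> F4_simple_root k > 0"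
  proof (intro ballI impI)
    fix k :: nat assume k: "k \<in> {1..4}" "k \<noteq> i"
    have "F4_simple_root k \<in> F4_simple_roots - {F4_simple_root i}"
      using sr_in[OF k(1)] sr_inj[OF k(1) assms(1)] k(2) by blast
    then have "lam \<bullet> coroot (F4_simple_root k) > 0" using pos by blast
    then have prod: "(2 / (F4_simple_root k \<bullet> F4_simple_root k)) * (lam \<bullet> F4_simple_root k) > 0"
      by (simp only: coroot_def inner_scaleR_right)
    have d: "2 / (F4_simple_root k \<bullet> F4_simple_root k) > 0" using sr_pos[OF k(1)] by simp
    have "lam \<bullet> F4_simple_root k > 0" using zero_less_mult_pos[OF prod d] .
    then have "c * (v \<bullet> F4_simple_root k) > 0" using lam_eq by simp
    then show "v \<bullet> F4_simple_root k > 0" using c(1) by (simp add: zero_less_mult_iff)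
  qed
  have vR: "v \<in> Res i j" using classify[OF assms(1,2) vSN vpos] .
  have lk: "lam$1 = c * v$1" "lam$2 = c * v$2" "lam$3 = c * v$3" "lam$4 = c * v$4"
    unfolding lam_eq by simp_all
  have "c \<in> \<int>" 
    apply (rule cint_lemma[OF vR])
    using ints unfolding lk by simp_all
  then obtain k :: int where k: "c = of_int k" using Ints_cases by blast
  define n where "n = nat k"
  have n: "n > 0" "c = real n" using k c(1) n_def by auto
  have "lam = real n *\<^sub>R v" using lam_eq n(2) by simp
  from final_concl[OF vR this] n(1) show ?thesis by (intro exI[of _ n] conjI)
qed


end
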